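(* Let $k,\ell$ be non-negative integers with $\ell<2k$. Let $D$ be an orientation of a $(k,\ell)$-sparse loopless multigraph $H=(V,F)$ in which every vertex has indegree at most $k$, and let $u,v\in V$ be distinct with $\varrho_D(u)+\varrho_D(v)=2k-\ell$. Let $S=\{w\in V\setminus\{u,v\}:\varrho_D(w)<k\}$, and let $T$ be the set of vertices of $V$ not reachable by a directed path in $D$ from any vertex of $S$. Then there exists a $(k,\ell)$-component of $H$ containing both $u$ and $v$ if and only if $u,v\in T$; and if such a component exists, it is exactly $T$.
   Context: For $X\subseteq V$, $i_H(X)$ is the number of edges of $H$ with both endpoints in $X$. $H$ is $(k,\ell)$-sparse if $i_H(X)\le\max\{k|X|-\ell,0\}$ for every $X\subseteq V$. A $(k,\ell)$-block of $H$ is a set $X\subseteq V$ with $i_H(X)=\max\{k|X|-\ell,0\}$; a $(k,\ell)$-component is an inclusion-wise maximal $(k,\ell)$-block. $\varrho_D(w)$ is the indegree of $w$ in $D$; every vertex of $S$ is considered reachable from $S$. *)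

theory Defs
  imports Main
begin

text \<open>A directed loopless multigraph D on vertex set V: a finite edge set F with
  tail and head maps. The underlying undirected multigraph is H = (V,F); D is an
  orientation of H.\<close>

definition loopless_digraph :: "'a set \<Rightarrow> 'e set \<Rightarrow> ('e \<Rightarrow> 'a) \<Rightarrow> ('e \<Rightarrow> 'a) \<Rightarrow> bool" where
  "loopless_digraph V F tail head \<longleftrightarrow> finite V \<and> finite F \<and>
     (\<forall>e\<in>F. tail e \<in> V \<and> head e \<in> V \<and> tail e \<noteq> head e)"

definition induced_edges :: "'e set \<Rightarrow> ('e \<Rightarrow> 'a) \<Rightarrow> ('e \<Rightarrow> 'a) \<Rightarrow> 'a set \<Rightarrow> nat" where
  "induced_edges F tail head X = card {e\<in>F. tail e \<in> X \<and> head e \<in> X}"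

definition sparse :: "nat \<Rightarrow> nat \<Rightarrow> 'a set \<Rightarrow> 'e set \<Rightarrow> ('e \<Rightarrow> 'a) \<Rightarrow> ('e \<Rightarrow> 'a) \<Rightarrow> bool" where
  "sparse k l V F tail head \<longleftrightarrow>
     (\<forall>X. X \<subseteq> V \<longrightarrow> int (induced_edges F tail head X) \<le> max (int k * int (card X) - int l) 0)"

definition block :: "nat \<Rightarrow> nat \<Rightarrow> 'a set \<Rightarrow> 'e set \<Rightarrow> ('e \<Rightarrow> 'a) \<Rightarrow> ('e \<Rightarrow> 'a) \<Rightarrow> 'a set \<Rightarrow> bool" where
  "block k l V F tail head X \<longleftrightarrow> X \<subseteq> V \<and>
     int (induced_edges F tail head X) = max (int k * int (card X) - int l) 0"

definition component :: "nat \<Rightarrow> nat \<Rightarrow> 'a set \<Rightarrow> 'e set \<Rightarrow> ('e \<Rightarrow> 'a) \<Rightarrow> ('e \<Rightarrow> 'a) \<Rightarrow> 'a set \<Rightarrow> bool" where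
  "component k l V F tail head X \<longleftrightarrow> block k l V F tail head X \<and>
     (\<forall>Y. block k l V F tail head Y \<longrightarrow> X \<subseteq> Y \<longrightarrow> Y = X)"

definition indeg :: "'e set \<Rightarrow> ('e \<Rightarrow> 'a) \<Rightarrow> 'a \<Rightarrow> nat" where
  "indeg F head w = card {e\<in>F. head e = w}"

text \<open>Arc relation of D; reachability is its reflexive transitive closure
  (so every vertex is reachable from itself).\<close>
definition arcs :: "'e set \<Rightarrow> ('e \<Rightarrow> 'a) \<Rightarrow> ('e \<Rightarrow> 'a) \<Rightarrow> ('a \<times> 'a) set" where
  "arcs F tail head = {(tail e, head e) | e. e \<in> F}"

end

theory Submission
  imports Defs
begin

lemma count_in:
  assumes "finite F" "finite X"
  shows "induced_edges F tail head X + card {e\<in>F. head e \<in> X \<and> tail e \<notin> X}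
         = (\<Sum>w\<in>X. indeg F head w)"
proof -
  have "{e\<in>F. head e \<in> X} = {e\<in>F. tail e \<in> X \<and> head e \<in> X} \<union> {e\<in>F. head e \<in> X \<and> tail e \<notin> X}"
    by blast
  hence "card {e\<in>F. head e \<in> X} = induced_edges F tail head X + card {e\<in>F. head e \<in> X \<and> tail e \<notin> X}"
    unfolding induced_edges_def using assms by (subst card_Un_disjoint[symmetric]) auto
  moreover have "{e\<in>F. head e \<in> X} = (\<Union>w\<in>X. {e\<in>F. head e = w})" by blast
  hence "card {e\<in>F. head e \<in> X} = (\<Sum>w\<in>X. card {e\<in>F. head e = w})"
    using assms by (simp add: card_UN_disjoint disjoint_iff)
  ultimately show ?thesis unfolding indeg_def by simp
qed

lemma sum_split2:
  fixes g :: "'a \<Rightarrow> nat"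
  assumes "finite Y" "u \<in> Y" "v \<in> Y" "u \<noteq> v"
  shows "(\<Sum>w\<in>Y. g w) = g u + g v + (\<Sum>w\<in>Y-{u,v}. g w)"
proof -
  have "(\<Sum>w\<in>Y. g w) = g u + (\<Sum>w\<in>Y-{u}. g w)" using assms by (simp add: sum.remove)
  also have "(\<Sum>w\<in>Y-{u}. g w) = g v + (\<Sum>w\<in>Y-{u}-{v}. g w)" using assms by (simp add: sum.remove)
  finally show ?thesis by (simp add: Diff_insert2[symmetric] insert_commute)
qed

theorem lemma4:
  fixes k l :: nat and V :: "'a set" and F :: "'e set"
    and tail head :: "'e \<Rightarrow> 'a" and u v :: 'a
  assumes "l < 2 * k"
    and "loopless_digraph V F tail head"
    and "sparse k l V F tail head"
    and "\<forall>w\<in>V. indeg F head w \<le> k"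
    and "u \<in> V" and "v \<in> V" and "u \<noteq> v"
    and "indeg F head u + indeg F head v = 2 * k - l"
  defines "S \<equiv> {w \<in> V - {u, v}. indeg F head w < k}"
  defines "T \<equiv> {w \<in> V. \<not> (\<exists>s\<in>S. (s, w) \<in> (arcs F tail head)\<^sup>*)}"
  shows "((\<exists>C. component k l V F tail head C \<and> u \<in> C \<and> v \<in> C) \<longleftrightarrow> u \<in> T \<and> v \<in> T)
     \<and> (\<forall>C. component k l V F tail head C \<and> u \<in> C \<and> v \<in> C \<longrightarrow> C = T)"
proof -
  note ld = assms(2)[unfolded loopless_digraph_def]
  have fV: "finite V" and fF: "finite F" using ld by auto
  let ?r = "indeg F head"
  let ?A = "arcs F tail head"
  have sumbound: "(\<Sum>w\<in>Y. ?r w) + (if Y \<inter> S = {} then 0 else 1) \<le> ?r u + ?r v + k * (card Y - 2)"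
    if Y: "Y \<subseteq> V" "u \<in> Y" "v \<in> Y" for Y
  proof -
    have fY: "finite Y" using Y fV finite_subset by blast
    have cY: "card (Y - {u,v}) = card Y - 2" using Y fY assms(7) by (simp add: card_Diff_subset)
    have le: "\<forall>w\<in>Y-{u,v}. ?r w \<le> k" using Y assms(4) by blast
    have "(\<Sum>w\<in>Y-{u,v}. ?r w) + (if Y \<inter> S = {} then 0 else 1) \<le> k * (card Y - 2)"
    proof (cases "Y \<inter> S = {}")
      case True
      have "(\<Sum>w\<in>Y-{u,v}. ?r w) \<le> (\<Sum>w\<in>Y-{u,v}. k)" using le by (intro sum_mono) auto
      then show ?thesis using True cY by (simp add: mult.commute)
    next
      case False
      then obtain w where w: "w \<in> Y - {u,v}" "?r w < k" unfolding S_def by blast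
      have "(\<Sum>w\<in>Y-{u,v}. ?r w) < (\<Sum>w\<in>Y-{u,v}. k)"
        using le w fY by (intro sum_strict_mono_ex1) auto
      then show ?thesis using False cY by (simp add: mult.commute)
    qed
    then show ?thesis using sum_split2[OF fY Y(2,3) assms(7), of ?r] by simp
  qed
  have cardY: "card Y \<ge> 2" if Y: "Y \<subseteq> V" "u \<in> Y" "v \<in> Y" for Y
  proof -
    have "finite Y" using Y fV finite_subset by blast
    moreover have "{u,v} \<subseteq> Y" using Y by auto
    ultimately have "card {u,v} \<le> card Y" by (rule card_mono)
    thus ?thesis using assms(7) by simp
  qed
  have blockT: "Y \<subseteq> T" if B: "block k l V F tail head Y" "u \<in> Y" "v \<in> Y" for Y
  proof -
    have YV: "Y \<subseteq> V" using B unfolding block_def by auto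
    have fY: "finite Y" using YV fV finite_subset by blast
    have c2: "card Y \<ge> 2" using cardY YV B by auto
    have pos: "int k * int (card Y) - int l > 0"
    proof -
      have "int k * int (card Y) \<ge> int k * 2" using c2 by (intro mult_left_mono) auto
      thus ?thesis using assms(1) by linarith
    qed
    have ie: "int (induced_edges F tail head Y) = int k * int (card Y) - int l"
      using B pos unfolding block_def by auto
    define inY where "inY = card {e\<in>F. head e \<in> Y \<and> tail e \<notin> Y}"
    have cnt: "induced_edges F tail head Y + inY = (\<Sum>w\<in>Y. ?r w)"
      using count_in[OF fF fY] unfolding inY_def by simp
    have sb: "(\<Sum>w\<in>Y. ?r w) + (if Y \<inter> S = {} then 0 else 1) \<le> ?r u + ?r v + k * (card Y - 2)"
      using sumbound YV B by auto
    have eq: "int (?r u + ?r v + k * (card Y - 2)) = int k * int (card Y) - int l"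
    proof -
      have "k * 2 \<le> k * card Y" using c2 by simp
      hence "k * (card Y - 2) = k * card Y - k * 2" by (simp add: diff_mult_distrib2)
      moreover have "l \<le> k * card Y" using assms(1) \<open>k * 2 \<le> k * card Y\<close> by linarith
      ultimately have "?r u + ?r v + k * (card Y - 2) = k * card Y - l"
        using assms(8) assms(1) \<open>k * 2 \<le> k * card Y\<close> by (simp add: mult.commute)
      thus ?thesis using \<open>l \<le> k * card Y\<close> by (simp add: of_nat_diff)
    qed
    have "int inY + int (if Y \<inter> S = {} then 0 else 1) \<le> 0"
      using cnt sb eq ie by linarith
    hence inY0: "inY = 0" and YS: "Y \<inter> S = {}" by (auto split: if_splits)
    have noin: "\<forall>e\<in>F. head e \<in> Y \<longrightarrow> tail e \<in> Y"
      using inY0 fF unfolding inY_def by auto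
    have bk: "\<And>s w. (s, w) \<in> ?A\<^sup>* \<Longrightarrow> w \<in> Y \<Longrightarrow> s \<in> Y"
    proof -
      fix s w
      show "(s, w) \<in> ?A\<^sup>* \<Longrightarrow> w \<in> Y \<Longrightarrow> s \<in> Y"
    proof (induction rule: rtrancl_induct)
      case base then show ?case .
    next
      case (step y z)
      then obtain e where "e \<in> F" "tail e = y" "head e = z" unfolding arcs_def by auto
      then show ?case using step noin by auto
    qed
    qed
    show ?thesis
    proof
      fix w assume "w \<in> Y"
      then show "w \<in> T" using YV YS bk unfolding T_def by blast
    qed
  qed
  have Tblock: "block k l V F tail head T" if uT: "u \<in> T" "v \<in> T"
  proof -
    have TV: "T \<subseteq> V" unfolding T_def by auto
    have fT: "finite T" using TV fV finite_subset by blast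
    have c2: "card T \<ge> 2" using cardY TV uT by auto
    have noin: "{e\<in>F. head e \<in> T \<and> tail e \<notin> T} = {}"
    proof -
      { fix e assume e: "e \<in> F" "head e \<in> T" "tail e \<notin> T"
        then obtain s where s: "s \<in> S" "(s, tail e) \<in> ?A\<^sup>*" using ld unfolding T_def by blast
        have "(tail e, head e) \<in> ?A" using e unfolding arcs_def by auto
        with s have "(s, head e) \<in> ?A\<^sup>*" by auto
        with s e have False unfolding T_def by blast }
      thus ?thesis by blast
    qed
    have ST: "T \<inter> S = {}" unfolding T_def by blast
    have rk: "\<forall>w\<in>T-{u,v}. ?r w = k"
      using ST TV assms(4) unfolding S_def by fastforce
    have "(\<Sum>w\<in>T. ?r w) = ?r u + ?r v + (\<Sum>w\<in>T-{u,v}. ?r w)"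
      using sum_split2[OF fT uT assms(7)] by simp
    also have "(\<Sum>w\<in>T-{u,v}. ?r w) = (\<Sum>w\<in>T-{u,v}. k)" using rk by simp
    also have "\<dots> = k * (card T - 2)" using fT uT assms(7) by (simp add: card_Diff_subset numeral_2_eq_2)
    finally have s: "(\<Sum>w\<in>T. ?r w) = ?r u + ?r v + k * (card T - 2)" .
    have ie: "induced_edges F tail head T = (\<Sum>w\<in>T. ?r w)"
      using count_in[OF fF fT, of tail head] noin by simp
    have eq: "int (?r u + ?r v + k * (card T - 2)) = int k * int (card T) - int l"
    proof -
      have "k * 2 \<le> k * card T" using c2 by simp
      hence "k * (card T - 2) = k * card T - k * 2" by (simp add: diff_mult_distrib2)
      moreover have "l \<le> k * card T" using assms(1) \<open>k * 2 \<le> k * card T\<close> by linarith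
      ultimately have "?r u + ?r v + k * (card T - 2) = k * card T - l"
        using assms(8) assms(1) \<open>k * 2 \<le> k * card T\<close> by (simp add: mult.commute)
      thus ?thesis using \<open>l \<le> k * card T\<close> by (simp add: of_nat_diff)
    qed
    have pos: "int k * int (card T) - int l > 0"
    proof -
      have "int k * int (card T) \<ge> int k * 2" using c2 by (intro mult_left_mono) auto
      thus ?thesis using assms(1) by linarith
    qed
    show ?thesis unfolding block_def using TV ie s eq pos by simp
  qed
  have Tcomp: "component k l V F tail head T" if uT: "u \<in> T" "v \<in> T"
    unfolding component_def using Tblock[OF uT] blockT uT by blast
  have compT: "C = T" if "component k l V F tail head C" "u \<in> C" "v \<in> C" for C
  proof -
    have "C \<subseteq> T" using that blockT unfolding component_def by blast
    hence "u \<in> T" "v \<in> T" using that by auto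
    hence "block k l V F tail head T" by (rule Tblock)
    thus ?thesis using that \<open>C \<subseteq> T\<close> unfolding component_def by blast
  qed
  show ?thesis using Tcomp compT by blast
qed

end
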